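(* Assume the codebook is randomly generated so that each codeword, independently, is drawn i.i.d. according to $P$ conditioned on satisfying the prefix condition with respect to $P$, and assume that $M=M_N$ and $N$ satisfy $\frac{N}{\ln N}\le\frac{\ln M}{\ln|\mathcal X|}$. Then for any threshold constants $t_1,t_2\in\mathbb R$ and any asynchronism level $A\ge1$, for any message $m$ and start time $l\in\{1,\dots,A\}$, $$\sum_{m'\neq m}\ \sum_{n=1}^{A+N-1}\ \sum_{i=1}^{\min(N,n)}\mathbb P_{m,l}\big(E(m',n,i)\big)\le\mathrm{poly}(N)\big(M^{-(t_1+t_2-1+o(1))}A+M^{-(t_2-1+o(1))}\big)$$ as $N\to\infty$.
   Context: Channel: finite input alphabet $\mathcal X$, finite output alphabet $\mathcal Y$, transition probabilities $Q(y|x)$, noise symbol $\star\in\mathcal X$. Prefix condition: $c^N\in\mathcal X^N$ satisfies it w.r.t. $P$ if for every $i$ with $N/\ln N<i\le N$, $\|P-\hat P_{c^i}\|_1\le1/\ln N$, where $\hat P_{c^i}$ is the empirical distribution of $(c_1,\dots,c_i)$. A codebook has $M$ codewords $C^N(m)\in\mathcal X^N$. Given the codebook, message $m$ and start time $\nu=l$, outputs $Y_1,Y_2,\dots$ are independent with $Y_i\sim Q(\cdot|\star)$ if $i\le l-1$ or $i\ge l+N$ and $Y_i\sim Q(\cdot|C_{i-l+1}(m))$ for $l\le i\le l+N-1$; $\mathbb P_{m,l}$ is the joint probability over codebook and outputs. Notation: $x_i^j=(x_i,\dots,x_j)$, $x^j=x_1^j$; $\hat P_{(x^n,y^n)}$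 empirical joint distribution, $\hat P_{y^n}$ empirical distribution; $I(J)$ mutual information of joint distribution $J$; $D$ Kullback–Leibler divergence; natural logs. For message $m'$, time $n\ge1$, $i\in\{1,\dots,\min(N,n)\}$, $k\in\{1,\dots,i\}$, $E(m',n,i,k)$ is the intersection of the events $k\,I(\hat P_{(C^k(m'),Y_{n-i+1}^{n-i+k})})+(i-k)\,I(\hat P_{(C_{k+1}^i(m'),Y_{n-i+k+1}^n)})\ge t_2\ln M$ and $i\,D(\hat P_{Y_{n-i+1}^n}\|Q(\cdot|\star))\ge t_1\ln M$ (zero-length terms are $0$), and $E(m',n,i)=\bigcap_{k=1}^iE(m',n,i,k)$. $\mathrm{poly}(N)$ denotes a term growing no faster than polynomially in $N$; $o(1)$ denotes terms vanishing as $N\to\infty$. *)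

theory Defs
  imports "HOL-Probability.Probability"
begin

(* empirical distribution of a finite sequence (0 for the empty sequence) *)
definition emp :: "'a list \<Rightarrow> 'a \<Rightarrow> real" where
  "emp xs a = real (count_list xs a) / real (length xs)"

definition emp_joint :: "'a list \<Rightarrow> 'b list \<Rightarrow> ('a \<times> 'b) \<Rightarrow> real" where
  "emp_joint xs ys = emp (zip xs ys)"

definition mutual_info :: "('a::finite \<times> 'b::finite \<Rightarrow> real) \<Rightarrow> real" where
  "mutual_info J =
     (\<Sum>p\<in>UNIV. if J p > 0
        then J p * ln (J p / ((\<Sum>y\<in>UNIV. J (fst p, y)) * (\<Sum>x\<in>UNIV. J (x, snd p)))) else 0)"

definition KL_div :: "('a::finite \<Rightarrow> real) \<Rightarrow> ('a \<Rightarrow> real) \<Rightarrow> ereal" where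
  "KL_div p q =
     (if \<exists>a. p a > 0 \<and> q a = 0 then \<infinity>
      else ereal (\<Sum>a\<in>UNIV. if p a > 0 then p a * ln (p a / q a) else 0))"

definition prefix_cond :: "'x::finite pmf \<Rightarrow> nat \<Rightarrow> 'x list \<Rightarrow> bool" where
  "prefix_cond P N c \<longleftrightarrow>
     (\<forall>i. real N / ln (real N) < real i \<and> i \<le> N \<longrightarrow>
        (\<Sum>x\<in>UNIV. \<bar>pmf P x - emp (take i c) x\<bar>) \<le> 1 / ln (real N))"

definition codeword_pmf :: "'x::finite pmf \<Rightarrow> nat \<Rightarrow> 'x list pmf" where
  "codeword_pmf P N = cond_pmf (replicate_pmf N P) {c. prefix_cond P N c}"

definition codebook_pmf :: "'x::finite pmf \<Rightarrow> nat \<Rightarrow> nat \<Rightarrow> (nat \<Rightarrow> 'x list) pmf" where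
  "codebook_pmf P N M = Pi_pmf {1..M} [] (\<lambda>_. codeword_pmf P N)"

(* channel input at time j (1-based) when message m starts at time l *)
definition chan_input :: "'x \<Rightarrow> nat \<Rightarrow> (nat \<Rightarrow> 'x list) \<Rightarrow> nat \<Rightarrow> nat \<Rightarrow> nat \<Rightarrow> 'x" where
  "chan_input star N C m l j = (if l \<le> j \<and> j \<le> l + N - 1 then C m ! (j - l) else star)"

definition joint_pmf ::
  "'x::finite pmf \<Rightarrow> ('x \<Rightarrow> 'y pmf) \<Rightarrow> 'x \<Rightarrow> nat \<Rightarrow> nat \<Rightarrow> nat \<Rightarrow> nat \<Rightarrow> nat
     \<Rightarrow> ((nat \<Rightarrow> 'x list) \<times> (nat \<Rightarrow> 'y)) pmf" where
  "joint_pmf P Q star N M m l H =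
     do { C \<leftarrow> codebook_pmf P N M;
          Y \<leftarrow> Pi_pmf {1..H} undefined (\<lambda>j. Q (chan_input star N C m l j));
          return_pmf (C, Y) }"

definition window :: "(nat \<Rightarrow> 'y) \<Rightarrow> nat \<Rightarrow> nat \<Rightarrow> 'y list" where
  "window Y a b = map Y [a..<Suc b]"

definition E_k ::
  "('x::finite \<Rightarrow> 'y::finite pmf) \<Rightarrow> 'x \<Rightarrow> real \<Rightarrow> real \<Rightarrow> nat
     \<Rightarrow> nat \<Rightarrow> nat \<Rightarrow> nat \<Rightarrow> nat \<Rightarrow> ((nat \<Rightarrow> 'x list) \<times> (nat \<Rightarrow> 'y)) set" where
  "E_k Q star t1 t2 M m' n i k =
     {(C, Y).
        real k * mutual_info (emp_joint (take k (C m')) (window Y (n - i + 1) (n - i + k)))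
        + real (i - k) * mutual_info (emp_joint (drop k (take i (C m'))) (window Y (n - i + k + 1) n))
          \<ge> t2 * ln (real M)
      \<and> ereal (real i) * KL_div (emp (window Y (n - i + 1) n)) (pmf (Q star))
          \<ge> ereal (t1 * ln (real M))}"

definition E_ev ::
  "('x::finite \<Rightarrow> 'y::finite pmf) \<Rightarrow> 'x \<Rightarrow> real \<Rightarrow> real \<Rightarrow> nat
     \<Rightarrow> nat \<Rightarrow> nat \<Rightarrow> nat \<Rightarrow> ((nat \<Rightarrow> 'x list) \<times> (nat \<Rightarrow> 'y)) set" where
  "E_ev Q star t1 t2 M m' n i = (\<Inter>k\<in>{1..i}. E_k Q star t1 t2 M m' n i k)"

end

theory Submission
  imports Defs "HOL-Real_Asymp.Real_Asymp"
begin


lemma sum_list_count: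
  fixes f :: "'a::finite \<Rightarrow> real"
  shows "sum_list (map f xs) = (\<Sum>c\<in>UNIV. real (count_list xs c) * f c)"
proof (induction xs)
  case Nil then show ?case by simp
next
  case (Cons a xs)
  have "(\<Sum>c\<in>UNIV. real (count_list (a#xs) c) * f c)
      = (\<Sum>c\<in>UNIV. real (count_list xs c) * f c + (if c = a then f c else 0))"
    by (intro sum.cong) (auto simp: algebra_simps)
  also have "\<dots> = (\<Sum>c\<in>UNIV. real (count_list xs c) * f c) + f a"
    by (simp add: sum.distrib)
  finally show ?case using Cons by simp
qed

lemma count_zip_fst:
  assumes "length x = length y"
  shows "(\<Sum>b\<in>(UNIV::'b::finite set). count_list (zip x y) (a, b)) = count_list x a"
  using assms
proof (induction x y rule: list_induct2)
  case Nil then show ?case by simp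
next
  case (Cons u x v y)
  have "(\<Sum>b\<in>(UNIV::'b set). count_list (zip (u#x) (v#y)) (a, b))
       = (\<Sum>b\<in>UNIV. count_list (zip x y) (a, b) + (if b = v \<and> a = u then 1 else 0))"
    by (intro sum.cong) auto
  also have "\<dots> = count_list x a + (if a = u then 1 else 0)"
    using Cons by (simp add: sum.distrib)
  finally show ?case by auto
qed

lemma count_zip_snd:
  assumes "length x = length y"
  shows "(\<Sum>a\<in>(UNIV::'a::finite set). count_list (zip x y) (a, b)) = count_list y b"
  using assms
proof (induction x y rule: list_induct2)
  case Nil then show ?case by simp
next
  case (Cons u x v y)
  have "(\<Sum>a\<in>(UNIV::'a set). count_list (zip (u#x) (v#y)) (a, b))
       = (\<Sum>a\<in>UNIV. count_list (zip x y) (a, b) + (if a = u \<and> b = v then 1 else 0))"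
    by (intro sum.cong) auto
  also have "\<dots> = count_list y b + (if b = v then 1 else 0)"
    using Cons by (simp add: sum.distrib)
  finally show ?case by auto
qed

lemma prod_list_exp_ln:
  fixes f :: "'a \<Rightarrow> real"
  assumes "\<forall>a\<in>set xs. f a > 0"
  shows "prod_list (map f xs) = exp (sum_list (map (\<lambda>a. ln (f a)) xs))"
  using assms by (induction xs) (auto simp: exp_add)

lemma sum_count_UNIV:
  "(\<Sum>c\<in>(UNIV::'a::finite set). count_list xs c) = length xs"
  by (rule sum_count_set) auto



lemma gibbs:
  fixes P :: "'a::finite pmf"
  assumes ne: "xs \<noteq> []" and pos: "\<forall>a\<in>set xs. pmf P a > 0"
  shows "sum_list (map (\<lambda>a. ln (pmf P a)) xs)
       \<le> sum_list (map (\<lambda>a. ln (real (count_list xs a) / real (length xs))) xs)"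
proof -
  define k where "k = real (length xs)"
  have k: "k > 0" using ne by (simp add: k_def)
  define m where "m a = real (count_list xs a) / k" for a
  have mpos: "m a > 0" if "a \<in> set xs" for a
    using that k count_list_0_iff[of xs a] by (auto simp: m_def intro!: divide_pos_pos)
  have "sum_list (map (\<lambda>a. ln (pmf P a)) xs) - sum_list (map (\<lambda>a. ln (m a)) xs)
      = sum_list (map (\<lambda>a. ln (pmf P a) - ln (m a)) xs)"
    by (simp add: sum_list_subtractf)
  also have "\<dots> \<le> sum_list (map (\<lambda>a. pmf P a / m a - 1) xs)"
  proof (rule sum_list_mono)
    fix a assume a: "a \<in> set xs"
    have "ln (pmf P a) - ln (m a) = ln (pmf P a / m a)"
      using pos a mpos[OF a] by (subst ln_div) auto
    also have "\<dots> \<le> pmf P a / m a - 1"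
      using pos a mpos[OF a] by (intro ln_le_minus_one) auto
    finally show "ln (pmf P a) - ln (m a) \<le> pmf P a / m a - 1" .
  qed
  also have "\<dots> = (\<Sum>c\<in>UNIV. real (count_list xs c) * (pmf P c / m c - 1))"
    by (rule sum_list_count)
  also have "\<dots> = (\<Sum>c\<in>UNIV. (if count_list xs c = 0 then 0 else k * pmf P c) - real (count_list xs c))"
    using k by (intro sum.cong) (auto simp: m_def field_simps)
  also have "\<dots> \<le> (\<Sum>c\<in>UNIV. k * pmf P c - real (count_list xs c))"
    using k by (intro sum_mono) auto
  also have "\<dots> = k * (\<Sum>c\<in>UNIV. pmf P c) - real (\<Sum>c\<in>UNIV. count_list xs c)"
    by (simp add: sum_subtractf sum_distrib_left)
  also have "\<dots> = 0"
    by (simp add: sum_count_UNIV k_def sum_pmf_eq_1)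
  finally show ?thesis by (simp add: m_def k_def)
qed



lemma emp_joint_eq:
  assumes "length x = length y"
  shows "emp_joint x y p = real (count_list (zip x y) p) / real (length x)"
  using assms by (simp add: emp_joint_def emp_def)

lemma emp_joint_m1:
  assumes "length x = length y"
  shows "(\<Sum>b\<in>(UNIV::'b::finite set). emp_joint x (y::'b list) (a, b)) = real (count_list x a) / real (length x)"
proof -
  have "(\<Sum>b\<in>(UNIV::'b set). emp_joint x y (a, b)) = (\<Sum>b\<in>UNIV. real (count_list (zip x y) (a,b))) / real (length x)"
    using assms by (simp add: emp_joint_eq sum_divide_distrib)
  also have "(\<Sum>b\<in>(UNIV::'b set). real (count_list (zip x y) (a,b))) = real (count_list x a)"
    using count_zip_fst[OF assms, of a] by (simp flip: of_nat_sum)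
  finally show ?thesis .
qed

lemma emp_joint_m2:
  assumes "length x = length y"
  shows "(\<Sum>a\<in>(UNIV::'a::finite set). emp_joint (x::'a list) y (a, b)) = real (count_list y b) / real (length x)"
proof -
  have "(\<Sum>a\<in>(UNIV::'a set). emp_joint x y (a, b)) = (\<Sum>a\<in>UNIV. real (count_list (zip x y) (a,b))) / real (length x)"
    using assms by (simp add: emp_joint_eq sum_divide_distrib)
  also have "(\<Sum>a\<in>(UNIV::'a set). real (count_list (zip x y) (a,b))) = real (count_list y b)"
    using count_zip_snd[OF assms, of b] by (simp flip: of_nat_sum)
  finally show ?thesis .
qed

definition condw :: "('a::finite \<times> 'b \<Rightarrow> real) \<Rightarrow> 'a \<times> 'b \<Rightarrow> real" where
  "condw J p = J p / (\<Sum>a\<in>UNIV. J (a, snd p))"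

lemma mi_type_bound:
  fixes P :: "'a::finite pmf" and x :: "'a list" and y :: "'b::finite list"
  assumes len: "length x = length y" and ne: "x \<noteq> []"
    and pos: "\<forall>a\<in>set x. pmf P a > 0"
  shows "prod_list (map (pmf P) x)
     \<le> exp (- (real (length x) * mutual_info (emp_joint x y))) * prod_list (map (condw (emp_joint x y)) (zip x y))"
proof -
  define k where "k = real (length x)"
  have k: "k > 0" using ne by (simp add: k_def)
  define J where "J = emp_joint x y"
  define z where "z = zip x y"
  have Jeq: "J p = real (count_list z p) / k" for p
    using len by (simp add: J_def z_def k_def emp_joint_eq)
  have m1: "(\<Sum>b\<in>UNIV. J (a, b)) = real (count_list x a) / k" for a
    using emp_joint_m1[OF len] by (simp add: J_def k_def)
  have m2: "(\<Sum>a\<in>UNIV. J (a, b)) = real (count_list y b) / k" for b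
    using emp_joint_m2[OF len] by (simp add: J_def k_def)
  define g where "g p = ln (J p / ((\<Sum>b\<in>UNIV. J (fst p, b)) * (\<Sum>a\<in>UNIV. J (a, snd p))))" for p
  have J0: "J p \<ge> 0" for p using k by (simp add: Jeq)
  have "mutual_info J = (\<Sum>p\<in>UNIV. J p * g p)"
    unfolding mutual_info_def g_def
    using J0 by (intro sum.cong) (auto simp: order.order_iff_strict)
  hence "k * mutual_info J = (\<Sum>p\<in>UNIV. real (count_list z p) * g p)"
    using k by (simp add: sum_distrib_left Jeq)
  also have "\<dots> = sum_list (map g z)"
    by (simp add: sum_list_count)
  finally have kMI: "k * mutual_info J = sum_list (map g z)" .
  have cpos: "count_list l c > 0" if "c \<in> set l" for l and c :: 'c
    using that count_list_0_iff[of l c] by auto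
  have Jpos: "J p > 0" if "p \<in> set z" for p
    using that k cpos[of p z] by (simp add: Jeq)
  have m1pos: "(\<Sum>b\<in>UNIV. J (fst p, b)) > 0" if "p \<in> set z" for p
    using that k cpos[of "fst p" x] set_zip_leftD[of "fst p" "snd p" x y] by (auto simp: m1 z_def)
  have m2pos: "(\<Sum>a\<in>UNIV. J (a, snd p)) > 0" if "p \<in> set z" for p
    using that k cpos[of "snd p" y] set_zip_rightD[of "fst p" "snd p" x y] by (auto simp: m2 z_def)
  have wpos: "condw J p > 0" if "p \<in> set z" for p
    using Jpos[OF that] m2pos[OF that] by (simp add: condw_def)
  have diff: "ln (condw J p) - g p = ln (real (count_list x (fst p)) / k)" if "p \<in> set z" for p
  proof -
    have "ln (condw J p) = ln (J p) - ln (\<Sum>a\<in>UNIV. J (a, snd p))"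
      using Jpos[OF that] m2pos[OF that] by (simp add: condw_def ln_div)
    moreover have "g p = ln (J p) - ln (\<Sum>b\<in>UNIV. J (fst p, b)) - ln (\<Sum>a\<in>UNIV. J (a, snd p))"
      using Jpos[OF that] m2pos[OF that] m1pos[OF that] by (simp add: g_def ln_div ln_mult)
    ultimately show ?thesis by (simp add: m1)
  qed
  have "sum_list (map (\<lambda>p. ln (condw J p)) z) - k * mutual_info J
      = sum_list (map (\<lambda>p. ln (condw J p) - g p) z)"
    by (simp add: kMI sum_list_subtractf)
  also have "\<dots> = sum_list (map (\<lambda>p. ln (real (count_list x (fst p)) / k)) z)"
    by (intro arg_cong[where f=sum_list] map_cong refl diff)
  also have "\<dots> = sum_list (map (\<lambda>a. ln (real (count_list x a) / k)) x)"
  proof -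
    have "map (\<lambda>p. ln (real (count_list x (fst p)) / k)) z = map (\<lambda>a. ln (real (count_list x a) / k)) (map fst z)"
      by simp
    also have "map fst z = x" using len by (simp add: z_def)
    finally show ?thesis by simp
  qed
  finally have eq: "sum_list (map (\<lambda>a. ln (real (count_list x a) / k)) x)
      = sum_list (map (\<lambda>p. ln (condw J p)) z) - k * mutual_info J" by simp
  have "sum_list (map (\<lambda>a. ln (pmf P a)) x) \<le> sum_list (map (\<lambda>a. ln (real (count_list x a) / k)) x)"
    using gibbs[OF ne pos] by (simp add: k_def)
  hence le: "sum_list (map (\<lambda>a. ln (pmf P a)) x) \<le> - (k * mutual_info J) + sum_list (map (\<lambda>p. ln (condw J p)) z)"
    using eq by simp
  have "prod_list (map (pmf P) x) = exp (sum_list (map (\<lambda>a. ln (pmf P a)) x))"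
    using pos by (rule prod_list_exp_ln)
  also have "\<dots> \<le> exp (- (k * mutual_info J) + sum_list (map (\<lambda>p. ln (condw J p)) z))"
    using le by simp
  also have "\<dots> = exp (- (k * mutual_info J)) * prod_list (map (condw J) z)"
    using wpos by (simp add: prod_list_exp_ln flip: exp_add)
  finally show ?thesis by (simp add: J_def z_def k_def)
qed



definition kl_sum :: "('a::finite \<Rightarrow> real) \<Rightarrow> ('a \<Rightarrow> real) \<Rightarrow> real" where
  "kl_sum p q = (\<Sum>a\<in>UNIV. if p a > 0 then p a * ln (p a / q a) else 0)"

lemma KL_div_cases:
  "KL_div p q = (if \<exists>a. p a > 0 \<and> q a = 0 then \<infinity> else ereal (kl_sum p q))"
  by (simp add: KL_div_def kl_sum_def)

lemma kl_type_bound: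
  fixes q :: "'a::finite \<Rightarrow> real" and y :: "'a list"
  assumes ne: "y \<noteq> []" and fin: "\<not> (\<exists>a. emp y a > 0 \<and> q a = 0)" and q0: "\<forall>a. q a \<ge> 0"
  shows "prod_list (map q y) = exp (- (real (length y) * kl_sum (emp y) q)) * prod_list (map (emp y) y)"
proof -
  define k where "k = real (length y)"
  have k: "k > 0" using ne by (simp add: k_def)
  define V where "V = emp y"
  have Veq: "V a = real (count_list y a) / k" for a by (simp add: V_def emp_def k_def)
  have cpos: "count_list y c > 0" if "c \<in> set y" for c
    using that count_list_0_iff[of y c] by auto
  have Vpos: "V a > 0" if "a \<in> set y" for a using cpos[OF that] k by (simp add: Veq)
  have qpos: "q a > 0" if "a \<in> set y" for a
    using fin Vpos[OF that] q0[rule_format, of a] by (auto simp: V_def order.order_iff_strict)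
  define h where "h a = ln (V a / q a)" for a
  have V0: "V a \<ge> 0" for a using k by (simp add: Veq)
  have "kl_sum V q = (\<Sum>a\<in>UNIV. V a * h a)"
    unfolding kl_sum_def h_def
    by (intro sum.cong refl) (use V0 in \<open>auto simp: order.order_iff_strict\<close>)
  hence "k * kl_sum V q = (\<Sum>a\<in>UNIV. real (count_list y a) * h a)"
    using k by (simp add: sum_distrib_left Veq)
  also have "\<dots> = sum_list (map h y)" by (simp add: sum_list_count)
  finally have kD: "k * kl_sum V q = sum_list (map h y)" .
  have "sum_list (map (\<lambda>a. ln (q a)) y) = sum_list (map (\<lambda>a. ln (V a) - h a) y)"
    proof (intro arg_cong[where f=sum_list] map_cong refl)
    fix a assume "a \<in> set y"
    with Vpos qpos have "V a > 0" "q a > 0" by auto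
    thus "ln (q a) = ln (V a) - h a" by (simp add: h_def ln_div)
  qed
  also have "\<dots> = - (k * kl_sum V q) + sum_list (map (\<lambda>a. ln (V a)) y)"
    by (simp add: sum_list_subtractf kD)
  finally have eq: "sum_list (map (\<lambda>a. ln (q a)) y) = - (k * kl_sum V q) + sum_list (map (\<lambda>a. ln (V a)) y)" .
  have "prod_list (map q y) = exp (sum_list (map (\<lambda>a. ln (q a)) y))"
    using qpos by (intro prod_list_exp_ln) auto
  also have "\<dots> = exp (- (k * kl_sum V q)) * prod_list (map V y)"
    using Vpos by (simp add: eq prod_list_exp_ln flip: exp_add)
  finally show ?thesis by (simp add: V_def k_def)
qed

lemma kl_inf_zero:
  fixes q :: "'a::finite \<Rightarrow> real"
  assumes "\<exists>a. emp y a > 0 \<and> q a = 0"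
  shows "prod_list (map q y) = 0"
proof -
  from assms obtain a where a: "emp y a > 0" "q a = 0" by blast
  have "count_list y a \<noteq> 0"
  proof
    assume "count_list y a = 0" with a(1) show False by (simp add: emp_def)
  qed
  hence "a \<in> set y" using count_list_0_iff by metis
  thus ?thesis using a by (auto simp: prod_list_zero_iff)
qed



lemma lists_Suc_eq:
  "{x::'a list. length x = Suc n} = (\<lambda>(a,xs). a#xs) ` (UNIV \<times> {x. length x = n})"
  by (auto simp: length_Suc_conv image_iff)

lemma finite_lists_len: "finite {x::'a::finite list. length x = n}"
  using finite_lists_length_eq[of "UNIV::'a set" n] by simp

lemma sum_lists_prod_zip:
  fixes w :: "'a::finite \<times> 'b \<Rightarrow> real"
  shows "(\<Sum>x\<in>{x::'a list. length x = length y}. prod_list (map w (zip x y)))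
       = prod_list (map (\<lambda>b. \<Sum>a\<in>UNIV. w (a,b)) y)"
proof (induction y)
  case Nil
  have "{x::'a list. length x = 0} = {[]}" by auto
  then show ?case by simp
next
  case (Cons b y)
  have inj: "inj_on (\<lambda>(a,xs). a#xs) (UNIV \<times> {x::'a list. length x = length y})"
    by (auto simp: inj_on_def)
  have "(\<Sum>x\<in>{x::'a list. length x = length (b#y)}. prod_list (map w (zip x (b#y))))
      = (\<Sum>p\<in>UNIV \<times> {x::'a list. length x = length y}. prod_list (map w (zip ((\<lambda>(a,xs). a#xs) p) (b#y))))"
    by (simp add: lists_Suc_eq sum.reindex[OF inj])
  also have "\<dots> = (\<Sum>(a,xs)\<in>UNIV \<times> {x::'a list. length x = length y}. w (a, b) * prod_list (map w (zip xs y)))"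
    by (intro sum.cong) auto
  also have "\<dots> = (\<Sum>a\<in>UNIV. \<Sum>xs\<in>{x::'a list. length x = length y}. w (a, b) * prod_list (map w (zip xs y)))"
    by (simp only: sum.cartesian_product)
  also have "\<dots> = (\<Sum>a\<in>UNIV. w (a, b)) * (\<Sum>xs\<in>{x::'a list. length x = length y}. prod_list (map w (zip xs y)))"
    by (simp add: sum_product)
  finally show ?case using Cons by simp
qed

lemma sum_lists_prod:
  fixes g :: "'a::finite \<Rightarrow> real"
  shows "(\<Sum>x\<in>{x::'a list. length x = n}. prod_list (map g x)) = (\<Sum>a\<in>UNIV. g a) ^ n"
proof (induction n)
  case 0
  have "{x::'a list. length x = 0} = {[]}" by auto
  then show ?case by simp
next
  case (Suc n)
  have inj: "inj_on (\<lambda>(a,xs). a#xs) (UNIV \<times> {x::'a list. length x = n})"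
    by (auto simp: inj_on_def)
  have "(\<Sum>x\<in>{x::'a list. length x = Suc n}. prod_list (map g x))
      = (\<Sum>p\<in>UNIV \<times> {x::'a list. length x = n}. prod_list (map g ((\<lambda>(a,xs). a#xs) p)))"
    by (simp add: lists_Suc_eq sum.reindex[OF inj])
  also have "\<dots> = (\<Sum>(a,xs)\<in>UNIV \<times> {x::'a list. length x = n}. g a * prod_list (map g xs))"
    by (intro sum.cong) auto
  also have "\<dots> = (\<Sum>a\<in>UNIV. \<Sum>xs\<in>{x::'a list. length x = n}. g a * prod_list (map g xs))"
    by (simp only: sum.cartesian_product)
  also have "\<dots> = (\<Sum>a\<in>UNIV. g a) * (\<Sum>xs\<in>{x::'a list. length x = n}. prod_list (map g xs))"
    by (simp add: sum_product)
  finally show ?case using Suc by simp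
qed

lemma condw_sum_le1:
  fixes J :: "'a::finite \<times> 'b \<Rightarrow> real"
  assumes "\<forall>p. J p \<ge> 0"
  shows "(\<Sum>a\<in>UNIV. condw J (a, b)) \<le> 1" "\<forall>p. condw J p \<ge> 0"
proof -
  have "(\<Sum>a\<in>UNIV. condw J (a, b)) = (\<Sum>a\<in>UNIV. J (a, b)) / (\<Sum>a\<in>UNIV. J (a, b))"
    unfolding condw_def snd_conv by (rule sum_divide_distrib[symmetric])
  also have "\<dots> \<le> 1" using divide_self_if[of "\<Sum>a\<in>UNIV. J (a, b)"] by (simp split: if_splits)
  finally show "(\<Sum>a\<in>UNIV. condw J (a, b)) \<le> 1" .
  show "\<forall>p. condw J p \<ge> 0" using assms by (auto simp: condw_def intro!: divide_nonneg_nonneg sum_nonneg)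
qed

lemma prod_list_le1:
  fixes f :: "'b \<Rightarrow> real"
  assumes "\<forall>b. 0 \<le> f b \<and> f b \<le> 1"
  shows "prod_list (map f y) \<le> 1"
proof -
  have "0 \<le> prod_list (map f y) \<and> prod_list (map f y) \<le> 1"
    using assms by (induction y) (auto intro: mult_le_one)
  thus ?thesis by simp
qed



lemma replicate_pmf_Suc_map:
  "replicate_pmf (Suc n) p = map_pmf (\<lambda>(x,xs). x#xs) (pair_pmf p (replicate_pmf n p))"
  by (simp add: pair_pmf_def map_pmf_def bind_assoc_pmf bind_return_pmf)

lemma pmf_replicate:
  "pmf (replicate_pmf n p) xs = (if length xs = n then prod_list (map (pmf p) xs) else 0)"
proof (induction n arbitrary: xs)
  case 0
  then show ?case by (cases xs) (auto simp: pmf_return)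
next
  case (Suc n)
  show ?case
  proof (cases xs)
    case Nil
    have "xs \<notin> set_pmf (replicate_pmf (Suc n) p)" using Nil by (simp add: set_replicate_pmf)
    hence "pmf (replicate_pmf (Suc n) p) xs = 0" by (simp only: set_pmf_iff not_not)
    then show ?thesis using Nil by (simp del: replicate_pmf.simps)
  next
    case (Cons a zs)
    have inj: "inj (\<lambda>(x::'a,xs). x#xs)" by (auto simp: inj_def)
    have "pmf (replicate_pmf (Suc n) p) xs = pmf (pair_pmf p (replicate_pmf n p)) (a, zs)"
      unfolding replicate_pmf_Suc_map Cons using pmf_map_inj'[OF inj, of _ "(a,zs)"] by simp
    then show ?thesis using Suc Cons by (simp add: pmf_pair)
  qed
qed

lemma prob_replicate:
  fixes p :: "'a::finite pmf"
  shows "measure_pmf.prob (replicate_pmf n p) X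
       = (\<Sum>xs\<in>X \<inter> {xs. length xs = n}. prod_list (map (pmf p) xs))"
proof -
  have "measure_pmf.prob (replicate_pmf n p) X = measure_pmf.prob (replicate_pmf n p) (X \<inter> {xs. length xs = n})"
    by (intro measure_prob_cong_0) (auto simp: pmf_replicate)
  also have "\<dots> = (\<Sum>xs\<in>X \<inter> {xs. length xs = n}. pmf (replicate_pmf n p) xs)"
    by (intro measure_measure_pmf_finite) (auto intro: finite_subset[OF _ finite_lists_len])
  also have "\<dots> = (\<Sum>xs\<in>X \<inter> {xs. length xs = n}. prod_list (map (pmf p) xs))"
    by (intro sum.cong) (auto simp: pmf_replicate)
  finally show ?thesis .
qed

lemma map_take_replicate_pmf:
  assumes "i \<le> N"
  shows "map_pmf (take i) (replicate_pmf N p) = replicate_pmf i p"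
proof -
  have "N = i + (N - i)" using assms by simp
  hence "replicate_pmf N p = do {xs \<leftarrow> replicate_pmf i p; ys \<leftarrow> replicate_pmf (N - i) p; return_pmf (xs @ ys)}"
    by (metis replicate_pmf_distrib)
  hence "map_pmf (take i) (replicate_pmf N p)
      = do {xs \<leftarrow> replicate_pmf i p; ys \<leftarrow> replicate_pmf (N - i) p; return_pmf (take i (xs @ ys))}"
    by (simp add: map_bind_pmf)
  also have "\<dots> = do {xs \<leftarrow> replicate_pmf i p; ys \<leftarrow> replicate_pmf (N - i) p; return_pmf xs}"
    by (intro bind_pmf_cong refl) (auto simp: set_replicate_pmf)
  also have "\<dots> = replicate_pmf i p" by (simp add: bind_return_pmf')
  finally show ?thesis .
qed

lemma prob_bind_le:
  fixes b :: real
  assumes le: "\<And>x. x \<in> set_pmf p \<Longrightarrow> measure_pmf.prob (f x) S \<le> b * indicator T x"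
    and b: "b \<ge> 0"
  shows "measure_pmf.prob (bind_pmf p f) S \<le> b * measure_pmf.prob p T"
proof -
  have "emeasure (measure_pmf (bind_pmf p f)) S = (\<integral>\<^sup>+x. emeasure (measure_pmf (f x)) S \<partial>measure_pmf p)"
    by simp
  also have "\<dots> \<le> (\<integral>\<^sup>+x. ennreal b * indicator T x \<partial>measure_pmf p)"
  proof (intro nn_integral_mono_AE)
    show "AE x in measure_pmf p. emeasure (measure_pmf (f x)) S \<le> ennreal b * indicator T x"
      unfolding AE_measure_pmf_iff
    proof
      fix x assume x: "x \<in> set_pmf p"
      have "emeasure (measure_pmf (f x)) S = ennreal (measure_pmf.prob (f x) S)"
        by (simp add: measure_pmf.emeasure_eq_measure)
      also have "\<dots> \<le> ennreal (b * indicator T x)"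
        using le[OF x] by (intro ennreal_leI)
      also have "\<dots> = ennreal b * indicator T x"
        using b by (simp add: ennreal_mult indicator_def)
      finally show "emeasure (measure_pmf (f x)) S \<le> ennreal b * indicator T x" .
    qed
  qed
  also have "\<dots> = ennreal b * emeasure (measure_pmf p) T"
    by (simp add: nn_integral_cmult_indicator)
  also have "\<dots> = ennreal (b * measure_pmf.prob p T)"
    using b by (simp add: measure_pmf.emeasure_eq_measure ennreal_mult)
  finally have "ennreal (measure_pmf.prob (bind_pmf p f) S) \<le> ennreal (b * measure_pmf.prob p T)"
    by (simp add: measure_pmf.emeasure_eq_measure)
  moreover have "0 \<le> b * measure_pmf.prob p T" using b by simp
  ultimately show ?thesis by (simp add: ennreal_le_iff)
qed

lemma prob_bind_le_const:
  fixes b :: real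
  assumes le: "\<And>x. x \<in> set_pmf p \<Longrightarrow> measure_pmf.prob (f x) S \<le> b"
    and b: "b \<ge> 0"
  shows "measure_pmf.prob (bind_pmf p f) S \<le> b"
  using prob_bind_le[of p f S b UNIV] le b by simp

lemma prob_cond_le:
  assumes ne: "set_pmf p \<inter> s \<noteq> {}"
  shows "measure_pmf.prob (cond_pmf p s) B \<le> measure_pmf.prob p B / measure_pmf.prob p s"
proof -
  have "measure_pmf.prob (cond_pmf p s) B = measure (uniform_measure (measure_pmf p) s) B"
    by (simp add: cond_pmf.rep_eq[OF ne])
  also have "\<dots> = measure_pmf.prob p (s \<inter> B) / measure_pmf.prob p s"
    by (intro measure_uniform_measure) (auto simp: emeasure_measure_pmf_not_zero[OF ne])
  also have "\<dots> \<le> measure_pmf.prob p B / measure_pmf.prob p s"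
    by (intro divide_right_mono measure_pmf.finite_measure_mono) auto
  finally show ?thesis .
qed



lemma type_union_bound:
  fixes S :: "'a set" and T :: "'a \<Rightarrow> 'c" and f :: "'a \<Rightarrow> real"
  assumes "finite S" "\<And>V. V \<in> T ` S \<Longrightarrow> (\<Sum>x\<in>{x\<in>S. T x = V}. f x) \<le> B"
    and "T ` S \<subseteq> Z" "finite Z" "B \<ge> 0"
  shows "sum f S \<le> real (card Z) * B"
proof -
  have "sum f S = (\<Sum>V\<in>T ` S. \<Sum>x\<in>{x\<in>S. T x = V}. f x)"
    using assms(1) by (rule sum.image_gen)
  also have "\<dots> \<le> (\<Sum>V\<in>T ` S. B)" by (intro sum_mono assms(2))
  also have "\<dots> = real (card (T ` S)) * B" by simp
  also have "\<dots> \<le> real (card Z) * B"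
    using assms(3,4,5) by (intro mult_right_mono) (auto intro: card_mono)
  finally show ?thesis .
qed

lemma card_types:
  "card ((\<lambda>c (p::'c::finite). real (c p) / real k) ` (Pi\<^sub>E UNIV (\<lambda>_. {0..k}))) \<le> (k+1) ^ CARD('c)"
proof -
  have "card ((\<lambda>c (p::'c). real (c p) / real k) ` (Pi\<^sub>E UNIV (\<lambda>_. {0..k}))) \<le> card (Pi\<^sub>E (UNIV::'c set) (\<lambda>_. {0..k}))"
    by (intro card_image_le finite_PiE) auto
  also have "\<dots> = (k+1) ^ CARD('c)" by (simp add: card_PiE)
  finally show ?thesis .
qed

lemma finite_types: "finite ((\<lambda>c (p::'c::finite). real (c p) / real k) ` (Pi\<^sub>E UNIV (\<lambda>_. {0..k})))"
  by (intro finite_imageI finite_PiE) auto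

lemma emp_in_types:
  assumes "length xs = k"
  shows "emp (xs :: 'c::finite list) \<in> (\<lambda>c (p::'c). real (c p) / real k) ` (Pi\<^sub>E UNIV (\<lambda>_. {0..k}))"
proof
  show "emp xs = (\<lambda>p. real (count_list xs p) / real k)"
    using assms by (simp add: emp_def fun_eq_iff)
  show "count_list xs \<in> Pi\<^sub>E UNIV (\<lambda>_. {0..k})"
    using assms count_le_length[of xs] by (auto simp: PiE_UNIV_domain)
qed

lemma prob_mi_bound:
  fixes P :: "'a::finite pmf" and y :: "'b::finite list"
  assumes ly: "length y = k" and k: "k > 0"
  shows "measure_pmf.prob (replicate_pmf k P) {x. real k * mutual_info (emp_joint x y) \<ge> r}
       \<le> real (k+1) ^ CARD('a \<times> 'b) * exp (- r)"
proof -
  define L where "L = {x::'a list. length x = k}"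
  define S where "S = {x. real k * mutual_info (emp_joint x y) \<ge> r} \<inter> L"
  define Z where "Z = ((\<lambda>c (p::'a\<times>'b). real (c p) / real k) ` (Pi\<^sub>E UNIV (\<lambda>_. {0..k})))"
  have finL: "finite L" unfolding L_def by (rule finite_lists_len)
  have "measure_pmf.prob (replicate_pmf k P) {x. real k * mutual_info (emp_joint x y) \<ge> r}
      = (\<Sum>x\<in>S. prod_list (map (pmf P) x))"
    by (simp add: prob_replicate S_def L_def)
  also have "\<dots> \<le> real (card Z) * exp (- r)"
  proof (rule type_union_bound[where T = "\<lambda>x. emp_joint x y"])
    show "finite S" using finL by (simp add: S_def)
    show "(\<lambda>x. emp_joint x y) ` S \<subseteq> Z"
    proof
      fix V assume "V \<in> (\<lambda>x. emp_joint x y) ` S"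
      then obtain x where x: "x \<in> S" "V = emp_joint x y" by blast
      have "length (zip x y) = k" using x ly by (simp add: S_def L_def)
      thus "V \<in> Z" unfolding Z_def x(2) emp_joint_def by (rule emp_in_types)
    qed
    show "finite Z" unfolding Z_def by (rule finite_types)
    show "exp (- r) \<ge> 0" by simp
    fix V assume "V \<in> (\<lambda>x. emp_joint x y) ` S"
    have V0: "\<forall>p. V p \<ge> 0" using \<open>V \<in> _\<close> by (auto simp: emp_joint_def emp_def)
    have "(\<Sum>x\<in>{x\<in>S. emp_joint x y = V}. prod_list (map (pmf P) x))
        \<le> (\<Sum>x\<in>{x\<in>S. emp_joint x y = V}. exp (- r) * prod_list (map (condw V) (zip x y)))"
    proof (intro sum_mono)
      fix x assume "x \<in> {x\<in>S. emp_joint x y = V}"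
      hence x: "length x = k" "real k * mutual_info V \<ge> r" "emp_joint x y = V"
        by (auto simp: S_def L_def)
      have cw0: "prod_list (map (condw V) (zip x y)) \<ge> 0"
        using condw_sum_le1(2)[OF V0] by (intro prod_list_nonneg) auto
      show "prod_list (map (pmf P) x) \<le> exp (- r) * prod_list (map (condw V) (zip x y))"
      proof (cases "\<forall>a\<in>set x. pmf P a > 0")
        case True
        have "prod_list (map (pmf P) x) \<le> exp (- (real (length x) * mutual_info (emp_joint x y))) * prod_list (map (condw (emp_joint x y)) (zip x y))"
          using x ly k True by (intro mi_type_bound) auto
        also have "\<dots> \<le> exp (- r) * prod_list (map (condw V) (zip x y))"
          unfolding x(3) using x(1,2) cw0 by (intro mult_right_mono) simp_all
        finally show ?thesis .
      next
        case False
        then obtain a where "a \<in> set x" "\<not> pmf P a > 0" by auto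
        hence "pmf P a = 0" using pmf_nonneg[of P a] by linarith
        hence "prod_list (map (pmf P) x) = 0" using \<open>a \<in> set x\<close> by (auto simp: prod_list_zero_iff)
        thus ?thesis using cw0 by simp
      qed
    qed
    also have "\<dots> \<le> (\<Sum>x\<in>L. exp (- r) * prod_list (map (condw V) (zip x y)))"
      using finL condw_sum_le1(2)[OF V0] by (intro sum_mono2) (auto simp: S_def intro!: mult_nonneg_nonneg prod_list_nonneg)
    also have "\<dots> = exp (- r) * prod_list (map (\<lambda>b. \<Sum>a\<in>UNIV. condw V (a,b)) y)"
      using sum_lists_prod_zip[of "condw V" y] by (simp add: L_def ly flip: sum_distrib_left)
    also have "\<dots> \<le> exp (- r) * 1"
      using condw_sum_le1[OF V0] by (intro mult_left_mono prod_list_le1) (auto intro: sum_nonneg)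
    finally show "(\<Sum>x\<in>{x\<in>S. emp_joint x y = V}. prod_list (map (pmf P) x)) \<le> exp (- r)" by simp
  qed
  also have "\<dots> \<le> real (k+1) ^ CARD('a \<times> 'b) * exp (- r)"
  proof -
    have "real (card Z) \<le> real ((k+1) ^ CARD('a \<times> 'b))"
      using card_types[of k, where 'c="'a\<times>'b"] unfolding Z_def of_nat_le_iff .
    thus ?thesis by (intro mult_right_mono) simp_all
  qed
  finally show ?thesis .
qed



lemma sum_emp:
  assumes "xs \<noteq> []"
  shows "(\<Sum>a\<in>(UNIV::'a::finite set). emp xs a) = 1"
proof -
  have "(\<Sum>a\<in>(UNIV::'a set). emp xs a) = real (\<Sum>a\<in>UNIV. count_list xs a) / real (length xs)"
    by (simp add: emp_def sum_divide_distrib)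
  also have "\<dots> = 1" using assms by (simp add: sum_count_UNIV)
  finally show ?thesis .
qed

lemma prob_kl_bound:
  fixes q :: "'a::finite pmf"
  assumes k: "k > 0"
  shows "measure_pmf.prob (replicate_pmf k q) {y. ereal (real k) * KL_div (emp y) (pmf q) \<ge> ereal r}
       \<le> real (k+1) ^ CARD('a) * exp (- r)"
proof -
  define L where "L = {x::'a list. length x = k}"
  define S where "S = {y. ereal (real k) * KL_div (emp y) (pmf q) \<ge> ereal r} \<inter> L"
  define Z where "Z = ((\<lambda>c (p::'a). real (c p) / real k) ` (Pi\<^sub>E UNIV (\<lambda>_. {0..k})))"
  have finL: "finite L" unfolding L_def by (rule finite_lists_len)
  have "measure_pmf.prob (replicate_pmf k q) {y. ereal (real k) * KL_div (emp y) (pmf q) \<ge> ereal r}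
      = (\<Sum>x\<in>S. prod_list (map (pmf q) x))"
    by (simp add: prob_replicate S_def L_def)
  also have "\<dots> \<le> real (card Z) * exp (- r)"
  proof (rule type_union_bound[where T = "emp"])
    show "finite S" using finL by (simp add: S_def)
    show "emp ` S \<subseteq> Z"
    proof
      fix V assume "V \<in> emp ` S"
      then obtain x where x: "x \<in> S" "V = emp x" by blast
      have "length x = k" using x by (simp add: S_def L_def)
      thus "V \<in> Z" unfolding Z_def x(2) by (rule emp_in_types)
    qed
    show "finite Z" unfolding Z_def by (rule finite_types)
    show "exp (- r) \<ge> 0" by simp
    fix V assume "V \<in> emp ` S"
    then obtain y0 where y0: "y0 \<in> S" "V = emp y0" by blast
    have y0ne: "y0 \<noteq> []" using y0 k by (auto simp: S_def L_def)
    have V0: "\<forall>p. V p \<ge> 0" using y0 by (auto simp: emp_def)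
    have V1: "(\<Sum>a\<in>UNIV. V a) = 1" using y0 sum_emp[OF y0ne] by simp
    have "(\<Sum>x\<in>{x\<in>S. emp x = V}. prod_list (map (pmf q) x))
        \<le> (\<Sum>x\<in>{x\<in>S. emp x = V}. exp (- r) * prod_list (map V x))"
    proof (intro sum_mono)
      fix x assume "x \<in> {x\<in>S. emp x = V}"
      hence x: "length x = k" "ereal (real k) * KL_div V (pmf q) \<ge> ereal r" "emp x = V"
        by (auto simp: S_def L_def)
      have xne: "x \<noteq> []" using x k by auto
      have cw0: "prod_list (map V x) \<ge> 0"
        using V0 by (intro prod_list_nonneg) auto
      show "prod_list (map (pmf q) x) \<le> exp (- r) * prod_list (map V x)"
      proof (cases "\<exists>a. emp x a > 0 \<and> pmf q a = 0")
        case True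
        hence "prod_list (map (pmf q) x) = 0" by (rule kl_inf_zero)
        thus ?thesis using cw0 by simp
      next
        case False
        hence "KL_div V (pmf q) = ereal (kl_sum V (pmf q))"
          using x(3) by (simp add: KL_div_cases)
        hence rle: "r \<le> real k * kl_sum V (pmf q)" using x(2) by simp
        have "prod_list (map (pmf q) x) = exp (- (real (length x) * kl_sum (emp x) (pmf q))) * prod_list (map (emp x) x)"
          using xne False by (intro kl_type_bound) auto
        also have "\<dots> \<le> exp (- r) * prod_list (map V x)"
          unfolding x(3) using x(1) rle cw0 by (intro mult_right_mono) simp_all
        finally show ?thesis .
      qed
    qed
    also have "\<dots> \<le> (\<Sum>x\<in>L. exp (- r) * prod_list (map V x))"
      using finL V0 by (intro sum_mono2) (auto simp: S_def intro!: mult_nonneg_nonneg prod_list_nonneg)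
    also have "\<dots> = exp (- r) * (\<Sum>a\<in>UNIV. V a) ^ k"
      using sum_lists_prod[of V k] by (simp add: L_def flip: sum_distrib_left)
    finally show "(\<Sum>x\<in>{x\<in>S. emp x = V}. prod_list (map (pmf q) x)) \<le> exp (- r)" by (simp add: V1)
  qed
  also have "\<dots> \<le> real (k+1) ^ CARD('a) * exp (- r)"
  proof -
    have "real (card Z) \<le> real ((k+1) ^ CARD('a))"
      using card_types[of k, where 'c="'a"] unfolding Z_def of_nat_le_iff .
    thus ?thesis by (intro mult_right_mono) simp_all
  qed
  finally show ?thesis .
qed



lemma map_Pi_pmf_list:
  assumes "finite A" "distinct js" "set js \<subseteq> A" "\<forall>j\<in>set js. p j = q"
  shows "map_pmf (\<lambda>Y. map Y js) (Pi_pmf A d p) = replicate_pmf (length js) q"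
  using assms
proof (induction js arbitrary: A)
  case Nil
  then show ?case by (simp add: map_pmf_const)
next
  case (Cons j js)
  have A: "A = insert j (A - {j})" using Cons.prems by auto
  have "map_pmf (\<lambda>Y. map Y (j#js)) (Pi_pmf A d p)
      = map_pmf (\<lambda>Y. map Y (j#js)) (Pi_pmf (insert j (A - {j})) d p)" using A by simp
  also have "\<dots> = do {y \<leftarrow> p j; f \<leftarrow> Pi_pmf (A - {j}) d p; return_pmf (map (f(j := y)) (j#js))}"
    using Cons.prems by (subst Pi_pmf_insert') (auto simp: map_bind_pmf)
  also have "\<dots> = do {y \<leftarrow> q; f \<leftarrow> Pi_pmf (A - {j}) d p; return_pmf (y # map f js)}"
    using Cons.prems by (intro bind_pmf_cong refl) (auto intro!: map_cong)
  also have "\<dots> = do {y \<leftarrow> q; zs \<leftarrow> map_pmf (\<lambda>f. map f js) (Pi_pmf (A - {j}) d p); return_pmf (y # zs)}"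
    by (simp add: bind_map_pmf)
  also have "map_pmf (\<lambda>f. map f js) (Pi_pmf (A - {j}) d p) = replicate_pmf (length js) q"
    using Cons.prems by (intro Cons.IH) auto
  finally show ?case by simp
qed

lemma map_eq_bernoulli:
  "map_pmf (\<lambda>x. x = a) P = bernoulli_pmf (pmf P a)"
proof (rule pmf_eqI)
  fix b :: bool
  have "pmf (map_pmf (\<lambda>x. x = a) P) True = pmf P a"
    by (simp add: pmf_map measure_pmf_single[symmetric] vimage_def)
  moreover have "pmf (map_pmf (\<lambda>x. x = a) P) False = 1 - pmf P a"
  proof -
    have "pmf (map_pmf (\<lambda>x. x = a) P) False = measure_pmf.prob P (UNIV - {a})"
      by (simp add: pmf_map vimage_def Diff_eq Compl_eq)
    also have "\<dots> = 1 - pmf P a"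
      using measure_pmf.prob_compl[of "{a}" P] by (simp add: measure_pmf_single)
    finally show ?thesis .
  qed
  ultimately show "pmf (map_pmf (\<lambda>x. x = a) P) b = pmf (bernoulli_pmf (pmf P a)) b"
    by (cases b) (auto simp: pmf_le_1)
qed

lemma map_count_replicate:
  "map_pmf (\<lambda>x. count_list x a) (replicate_pmf n P) = binomial_pmf n (pmf P a)"
proof (induction n)
  case 0
  then show ?case by (simp add: binomial_pmf_0 pmf_le_1)
next
  case (Suc n)
  have p01: "pmf P a \<in> {0..1}" by (simp add: pmf_le_1)
  have "map_pmf (\<lambda>x. count_list x a) (replicate_pmf (Suc n) P)
      = do {x \<leftarrow> P; k \<leftarrow> map_pmf (\<lambda>x. count_list x a) (replicate_pmf n P);
            return_pmf ((if x = a then 1 else 0) + k)}"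
    by (auto simp: map_bind_pmf bind_map_pmf intro!: bind_pmf_cong)
  also have "\<dots> = do {b \<leftarrow> map_pmf (\<lambda>x. x = a) P; k \<leftarrow> binomial_pmf n (pmf P a);
            return_pmf ((if b then 1 else 0) + k)}"
    by (simp add: Suc bind_map_pmf)
  also have "\<dots> = binomial_pmf (Suc n) (pmf P a)"
    by (simp add: map_eq_bernoulli binomial_pmf_Suc[OF p01])
  finally show ?case .
qed



lemma map_count_take_replicate:
  assumes "i \<le> N"
  shows "map_pmf (\<lambda>c. count_list (take i c) a) (replicate_pmf N P) = binomial_pmf i (pmf P a)"
proof -
  have "map_pmf (\<lambda>c. count_list (take i c) a) (replicate_pmf N P)
      = map_pmf (\<lambda>x. count_list x a) (map_pmf (take i) (replicate_pmf N P))"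
    by (simp add: pmf.map_comp o_def)
  also have "\<dots> = binomial_pmf i (pmf P a)"
    using assms by (simp add: map_take_replicate_pmf map_count_replicate)
  finally show ?thesis .
qed

lemma prefix_fail_bound:
  fixes P :: "'x::finite pmf" and N :: nat
  assumes N3: "N \<ge> 3"
  shows "measure_pmf.prob (replicate_pmf N P) {c. \<not> prefix_cond P N c}
     \<le> 2 * real CARD('x) * real N * exp (- 2 * (real N / ln (real N)) * (1 / (real CARD('x) * ln (real N)))^2)"
proof -
  define C where "C = real CARD('x)"
  define \<delta> where "\<delta> = 1 / (C * ln (real N))"
  define B where "B = 2 * exp (- 2 * (real N / ln (real N)) * \<delta>^2)"
  have lnN: "ln (real N) > 0" using N3 by simp
  have C1: "C \<ge> 1" by (simp add: C_def)
  have \<delta>0: "\<delta> > 0" using lnN C1 by (simp add: \<delta>_def)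
  define I where "I = {i. real N / ln (real N) < real i \<and> i \<le> N}"
  have I_sub: "I \<subseteq> {1..N}"
  proof
    fix i assume "i \<in> I"
    hence "real N / ln (real N) < real i" "i \<le> N" by (auto simp: I_def)
    moreover have "real N / ln (real N) > 0" using lnN N3 by simp
    ultimately show "i \<in> {1..N}" by auto
  qed
  have finI: "finite I" using I_sub finite_subset by blast
  have cardI: "card I \<le> N" using card_mono[OF _ I_sub] by simp
  define E where "E = (\<lambda>(i, a). {c. \<delta> \<le> \<bar>real (count_list (take i c) a) / real i - pmf P a\<bar>})"
  have "measure_pmf.prob (replicate_pmf N P) {c. \<not> prefix_cond P N c}
      = measure_pmf.prob (replicate_pmf N P) ({c. \<not> prefix_cond P N c} \<inter> {c. length c = N})"
    by (intro measure_prob_cong_0) (auto simp: pmf_replicate)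
  also have "\<dots> \<le> measure_pmf.prob (replicate_pmf N P) (\<Union>ia\<in>I \<times> UNIV. E ia)"
  proof (intro measure_pmf.finite_measure_mono subsetI)
    fix c assume "c \<in> {c. \<not> prefix_cond P N c} \<inter> {c. length c = N}"
    hence nc: "\<not> prefix_cond P N c" and lc: "length c = N" by auto
    from nc obtain i where i: "real N / ln (real N) < real i" "i \<le> N"
      and gt: "(\<Sum>x\<in>UNIV. \<bar>pmf P x - emp (take i c) x\<bar>) > 1 / ln (real N)"
      by (auto simp: prefix_cond_def not_le)
    have iI: "i \<in> I" using i by (simp add: I_def)
    have emp_eq: "emp (take i c) x = real (count_list (take i c) x) / real i" for x
      using lc i by (simp add: emp_def min_def)
    show "c \<in> (\<Union>ia\<in>I \<times> UNIV. E ia)"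
    proof (rule ccontr)
      assume "c \<notin> (\<Union>ia\<in>I \<times> UNIV. E ia)"
      hence small: "\<bar>pmf P x - emp (take i c) x\<bar> < \<delta>" for x
        using iI by (auto simp: E_def emp_eq abs_minus_commute not_le)
      have "(\<Sum>x\<in>UNIV. \<bar>pmf P x - emp (take i c) x\<bar>) \<le> (\<Sum>x\<in>(UNIV::'x set). \<delta>)"
        by (intro sum_mono less_imp_le small)
      also have "\<dots> = C * \<delta>" by (simp add: C_def)
      also have "\<dots> = 1 / ln (real N)" using C1 lnN by (simp add: \<delta>_def)
      finally show False using gt by simp
    qed
  qed simp
  also have "\<dots> \<le> (\<Sum>ia\<in>I \<times> UNIV. measure_pmf.prob (replicate_pmf N P) (E ia))"
    using finI by (intro measure_pmf.finite_measure_subadditive_finite) auto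
  also have "\<dots> \<le> (\<Sum>ia\<in>I \<times> (UNIV::'x set). B)"
  proof (intro sum_mono)
    fix ia assume "ia \<in> I \<times> (UNIV::'x set)"
    then obtain i a where ia: "ia = (i, a)" "i \<in> I" by auto
    have i0: "i > 0" "i \<le> N" using ia I_sub by auto
    have ilow: "real N / ln (real N) \<le> real i" using ia by (simp add: I_def)
    have "measure_pmf.prob (replicate_pmf N P) (E ia)
        = measure_pmf.prob (map_pmf (\<lambda>c. count_list (take i c) a) (replicate_pmf N P))
            {x. \<delta> \<le> \<bar>real x / real i - pmf P a\<bar>}"
      by (simp add: ia E_def vimage_def)
    also have "\<dots> = measure_pmf.prob (binomial_pmf i (pmf P a)) {x. \<bar>real x / real i - pmf P a\<bar> \<ge> \<delta>}"
      using i0 by (simp add: map_count_take_replicate)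
    also have "\<dots> \<le> 2 * exp (- 2 * real i * \<delta>^2)"
    proof -
      have bd: "binomial_distribution (pmf P a)" by unfold_locales (simp add: pmf_le_1)
      show ?thesis using binomial_distribution.prob_abs_ge'[OF bd, of i \<delta>] i0 \<delta>0 by simp
    qed
    also have "\<dots> \<le> B"
    proof -
      have "2 * (real N / ln (real N)) * \<delta>^2 \<le> 2 * real i * \<delta>^2"
        using ilow \<delta>0 by (intro mult_right_mono) auto
      thus ?thesis unfolding B_def by simp
    qed
    finally show "measure_pmf.prob (replicate_pmf N P) (E ia) \<le> B" .
  qed
  also have "\<dots> = real (card I) * C * B" by (simp add: card_cartesian_product C_def)
  also have "\<dots> \<le> real N * C * B"
    using cardI C1 by (intro mult_right_mono) (auto simp: B_def)
  finally show ?thesis by (simp add: B_def C_def \<delta>_def algebra_simps)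
qed

lemma prefix_eventually:
  fixes P :: "'x::finite pmf"
  shows "\<forall>\<^sub>F N in sequentially. measure_pmf.prob (replicate_pmf N P) {c. prefix_cond P N c} \<ge> 1/2"
proof -
  define C where "C = real CARD('x)"
  have C0: "C > 0" by (simp add: C_def)
  have lim: "((\<lambda>N::nat. 2 * C * real N * exp (- 2 * (real N / ln (real N)) * (1 / (C * ln (real N)))^2)) \<longlongrightarrow> 0) sequentially"
    using C0 by real_asymp
  have ev: "\<forall>\<^sub>F N in sequentially. 2 * C * real N * exp (- 2 * (real N / ln (real N)) * (1 / (C * ln (real N)))^2) < 1/2"
    using order_tendstoD(2)[OF lim, of "1/2"] by simp
  show ?thesis
    using ev eventually_ge_at_top[of 3]
  proof eventually_elim
    case (elim N)
    have "measure_pmf.prob (replicate_pmf N P) {c. \<not> prefix_cond P N c} < 1/2"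
      using prefix_fail_bound[OF elim(2), of P] elim(1) by (simp add: C_def)
    moreover have "measure_pmf.prob (replicate_pmf N P) {c. \<not> prefix_cond P N c}
        = 1 - measure_pmf.prob (replicate_pmf N P) {c. prefix_cond P N c}"
      using measure_pmf.prob_compl[of "{c. prefix_cond P N c}" "replicate_pmf N P"]
      by (simp add: Compl_eq Diff_eq)
    ultimately show ?case by simp
  qed
qed



lemma chan_input_upd:
  "m' \<noteq> m \<Longrightarrow> chan_input star N (R(m' := c)) m l j = chan_input star N R m l j"
  by (simp add: chan_input_def)

lemma joint_decomp:
  assumes "m' \<in> {1..M}" "m' \<noteq> m"
  shows "joint_pmf P Q star N M m l H =
    do {R \<leftarrow> Pi_pmf ({1..M} - {m'}) [] (\<lambda>_. codeword_pmf P N);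
        Y \<leftarrow> Pi_pmf {1..H} undefined (\<lambda>j. Q (chan_input star N R m l j));
        map_pmf (\<lambda>c. (R(m' := c), Y)) (codeword_pmf P N)}"
proof -
  define W where "W = codeword_pmf P N"
  define YP where "YP R = Pi_pmf {1..H} undefined (\<lambda>j. Q (chan_input star N R m l j))" for R
  have YPu: "YP (R(m' := c)) = YP R" for R c using assms by (simp add: YP_def chan_input_upd)
  have ins: "{1..M} = insert m' ({1..M} - {m'})" using assms by auto
  have "codebook_pmf P N M = do {c \<leftarrow> W; R \<leftarrow> Pi_pmf ({1..M} - {m'}) [] (\<lambda>_. W); return_pmf (R(m' := c))}"
    unfolding codebook_pmf_def W_def by (subst ins, subst Pi_pmf_insert') auto
  hence "joint_pmf P Q star N M m l H = do {c \<leftarrow> W; R \<leftarrow> Pi_pmf ({1..M} - {m'}) [] (\<lambda>_. W);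
        Y \<leftarrow> YP R; return_pmf (R(m' := c), Y)}"
    unfolding joint_pmf_def using assms(2) by (simp add: bind_assoc_pmf bind_return_pmf YP_def chan_input_upd)
  also have "\<dots> = do {R \<leftarrow> Pi_pmf ({1..M} - {m'}) [] (\<lambda>_. W); c \<leftarrow> W;
        Y \<leftarrow> YP R; return_pmf (R(m' := c), Y)}"
    by (rule bind_commute_pmf)
  also have "\<dots> = do {R \<leftarrow> Pi_pmf ({1..M} - {m'}) [] (\<lambda>_. W); Y \<leftarrow> YP R; c \<leftarrow> W;
        return_pmf (R(m' := c), Y)}"
    by (intro bind_pmf_cong refl bind_commute_pmf)
  finally show ?thesis by (simp add: W_def YP_def map_pmf_def)
qed



lemma length_window: "length (window Y a b) = Suc b - a"
  by (auto simp: window_def)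

lemma E_ev_sub:
  assumes "1 \<le> i" "i \<le> n"
  shows "E_ev Q star t1 t2 M m' n i \<subseteq>
    {(C, Y). ereal (real i) * KL_div (emp (window Y (n - i + 1) n)) (pmf (Q star)) \<ge> ereal (t1 * ln (real M))
       \<and> t2 * ln (real M) \<le> real i * mutual_info (emp_joint (take i (C m')) (window Y (n - i + 1) n))}"
proof
  fix z assume z: "z \<in> E_ev Q star t1 t2 M m' n i"
  obtain C Y where zCY: "z = (C, Y)" by (cases z)
  have "z \<in> E_k Q star t1 t2 M m' n i i" using z assms by (auto simp: E_ev_def)
  moreover have "n - i + i = n" using assms by simp
  ultimately show "z \<in> {(C, Y). ereal (real i) * KL_div (emp (window Y (n - i + 1) n)) (pmf (Q star)) \<ge> ereal (t1 * ln (real M))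
       \<and> t2 * ln (real M) \<le> real i * mutual_info (emp_joint (take i (C m')) (window Y (n - i + 1) n))}"
    by (simp add: E_k_def zCY)
qed

lemma codeword_prob_le:
  assumes rho: "measure_pmf.prob (replicate_pmf N P) {c. prefix_cond P N c} \<ge> 1/2"
  shows "measure_pmf.prob (codeword_pmf P N) B \<le> 2 * measure_pmf.prob (replicate_pmf N P) B"
proof -
  define \<rho> where "\<rho> = measure_pmf.prob (replicate_pmf N P) {c. prefix_cond P N c}"
  have "\<rho> \<noteq> 0" using rho by (simp add: \<rho>_def)
  hence ne: "set_pmf (replicate_pmf N P) \<inter> {c. prefix_cond P N c} \<noteq> {}"
    unfolding \<rho>_def measure_pmf_zero_iff by blast
  have "measure_pmf.prob (codeword_pmf P N) B \<le> measure_pmf.prob (replicate_pmf N P) B / \<rho>"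
    unfolding codeword_pmf_def \<rho>_def by (rule prob_cond_le[OF ne])
  also have "\<dots> \<le> 2 * measure_pmf.prob (replicate_pmf N P) B"
  proof -
    have r0: "\<rho> > 0" using rho by (simp add: \<rho>_def)
    have x0: "measure_pmf.prob (replicate_pmf N P) B \<ge> 0" by simp
    have "measure_pmf.prob (replicate_pmf N P) B * 1 \<le> measure_pmf.prob (replicate_pmf N P) B * (2 * \<rho>)"
      using rho x0 by (intro mult_left_mono) (auto simp: \<rho>_def)
    thus ?thesis using r0 by (simp add: pos_divide_le_eq algebra_simps)
  qed
  finally show ?thesis .
qed

lemma term_bound:
  fixes P :: "'x::finite pmf" and Q :: "'x \<Rightarrow> 'y::finite pmf"
  assumes m': "m' \<in> {1..M}" "m' \<noteq> m"
    and i: "1 \<le> i" "i \<le> N" "i \<le> n" "n \<le> H"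
    and rho: "measure_pmf.prob (replicate_pmf N P) {c. prefix_cond P N c} \<ge> 1/2"
  shows "measure_pmf.prob (joint_pmf P Q star N M m l H) (E_ev Q star t1 t2 M m' n i)
    \<le> 2 * real (i+1) ^ CARD('x \<times> 'y) * exp (- (t2 * ln (real M))) *
       (if n < l \<or> l + N \<le> n - i + 1 then real (i+1) ^ CARD('y) * exp (- (t1 * ln (real M))) else 1)"
proof -
  define W where "W = codeword_pmf P N"
  define YP where "YP R = Pi_pmf {1..H} undefined (\<lambda>j. Q (chan_input star N R m l j))" for R
  define a where "a = n - i + 1"
  define Gs where "Gs = {Y::nat \<Rightarrow> 'y. ereal (real i) * KL_div (emp (window Y a n)) (pmf (Q star)) \<ge> ereal (t1 * ln (real M))}"
  define Fs where "Fs (Y::nat \<Rightarrow> 'y) = {x::'x list. t2 * ln (real M) \<le> real i * mutual_info (emp_joint x (window Y a n))}" for Y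
  define \<beta> where "\<beta> = 2 * real (i+1) ^ CARD('x \<times> 'y) * exp (- (t2 * ln (real M)))"
  define \<gamma> where "\<gamma> = (if n < l \<or> l + N \<le> n - i + 1 then real (i+1) ^ CARD('y) * exp (- (t1 * ln (real M))) else 1)"
  define E where "E = E_ev Q star t1 t2 M m' n i"
  have \<beta>0: "\<beta> \<ge> 0" by (simp add: \<beta>_def)
  have \<gamma>0: "\<gamma> \<ge> 0" by (simp add: \<gamma>_def)
  have lwin: "length (window Y a n) = i" for Y using i by (simp add: length_window a_def)
  have Esub: "E \<subseteq> {(C, Y). Y \<in> Gs \<and> take i (C m') \<in> Fs Y}"
    using E_ev_sub[OF i(1) i(3), of Q star t1 t2 M m'] by (auto simp: E_def Gs_def Fs_def a_def)
  have step_c: "measure_pmf.prob (map_pmf (\<lambda>c. (R(m' := c), Y)) W) E \<le> \<beta> * indicator Gs Y" for R Y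
  proof (cases "Y \<in> Gs")
    case False
    have "(\<lambda>c. (R(m' := c), Y)) -` E = {}" using Esub False by auto
    thus ?thesis using False by simp
  next
    case True
    have "measure_pmf.prob (map_pmf (\<lambda>c. (R(m' := c), Y)) W) E = measure_pmf.prob W ((\<lambda>c. (R(m' := c), Y)) -` E)"
      by simp
    also have "\<dots> \<le> measure_pmf.prob W {c. take i c \<in> Fs Y}"
      using Esub by (intro measure_pmf.finite_measure_mono) auto
    also have "\<dots> \<le> 2 * measure_pmf.prob (replicate_pmf N P) {c. take i c \<in> Fs Y}"
      unfolding W_def by (rule codeword_prob_le[OF rho])
    also have "\<dots> \<le> 2 * (real (i + 1) ^ CARD('x \<times> 'y) * exp (- (t2 * ln (real M))))"
    proof -
      have "measure_pmf.prob (replicate_pmf N P) {c. take i c \<in> Fs Y}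
          = measure_pmf.prob (map_pmf (take i) (replicate_pmf N P)) (Fs Y)"
        by (simp add: vimage_def)
      also have "\<dots> = measure_pmf.prob (replicate_pmf i P) (Fs Y)"
        using i by (simp add: map_take_replicate_pmf)
      also have "\<dots> \<le> real (i+1) ^ CARD('x \<times> 'y) * exp (- (t2 * ln (real M)))"
      proof -
        have ip: "i > 0" using i by simp
        show ?thesis unfolding Fs_def using prob_mi_bound[OF lwin[of Y] ip, of P "t2 * ln (real M)"] by simp
      qed
      finally show ?thesis by simp
    qed
    finally have fin: "measure_pmf.prob (map_pmf (\<lambda>c. (R(m' := c), Y)) W) E \<le> 2 * (real (i + 1) ^ CARD('x \<times> 'y) * exp (- (t2 * ln (real M))))" .
    have "indicator Gs Y = (1::real)" using True by simp
    thus ?thesis using fin unfolding \<beta>_def by (simp only: mult.assoc mult_1_right)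
  qed
  have step_G: "measure_pmf.prob (YP R) Gs \<le> \<gamma>" for R
  proof (cases "n < l \<or> l + N \<le> n - i + 1")
    case False
    thus ?thesis by (simp add: \<gamma>_def)
  next
    case True
    define js where "js = [a..<Suc n]"
    have ljs: "length js = i" using i by (simp add: js_def a_def)
    have "map_pmf (\<lambda>Y. map Y js) (YP R) = replicate_pmf (length js) (Q star)"
      unfolding YP_def
    proof (rule map_Pi_pmf_list)
      show "distinct js" "finite {1..H}" by (simp_all add: js_def)
      show "set js \<subseteq> {1..H}" using i by (auto simp: js_def a_def)
      show "\<forall>j\<in>set js. Q (chan_input star N R m l j) = Q star"
        using True i by (auto simp: js_def a_def chan_input_def)
    qed
    hence "measure_pmf.prob (YP R) Gs = measure_pmf.prob (replicate_pmf i (Q star))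
        {y. ereal (real i) * KL_div (emp y) (pmf (Q star)) \<ge> ereal (t1 * ln (real M))}"
      using ljs measure_map_pmf[of "\<lambda>Y. map Y js" "YP R"]
      by (simp add: Gs_def window_def js_def vimage_def)
    also have "\<dots> \<le> real (i+1) ^ CARD('y) * exp (- (t1 * ln (real M)))"
      using i by (intro prob_kl_bound) auto
    finally show ?thesis using True by (simp add: \<gamma>_def)
  qed
  have "measure_pmf.prob (joint_pmf P Q star N M m l H) E \<le> \<beta> * \<gamma>"
    unfolding joint_decomp[OF m', of P Q star N l H] W_def[symmetric] YP_def[symmetric]
  proof (rule prob_bind_le_const)
    fix R
    have "measure_pmf.prob (YP R \<bind> (\<lambda>Y. map_pmf (\<lambda>c. (R(m' := c), Y)) W)) E \<le> \<beta> * measure_pmf.prob (YP R) Gs"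
      by (rule prob_bind_le[OF step_c \<beta>0])
    also have "\<dots> \<le> \<beta> * \<gamma>" using step_G \<beta>0 by (intro mult_left_mono)
    finally show "measure_pmf.prob (YP R \<bind> (\<lambda>Y. map_pmf (\<lambda>c. (R(m' := c), Y)) W)) E \<le> \<beta> * \<gamma>" .
  qed (use \<beta>0 \<gamma>0 in simp)
  thus ?thesis by (simp add: E_def \<beta>_def \<gamma>_def)
qed



lemma inner_sum_bound:
  fixes f :: "nat \<Rightarrow> nat \<Rightarrow> real"
  assumes le: "\<And>n i. n \<in> {1..H} \<Longrightarrow> i \<in> {1..min N n} \<Longrightarrow> f n i \<le> \<alpha> * (e + (if n \<in> {l..<l+2*N} then 1 else 0))"
    and \<alpha>: "\<alpha> \<ge> 0" and e: "e \<ge> 0" and H: "H \<le> A * N"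
  shows "(\<Sum>n\<in>{1..H}. \<Sum>i\<in>{1..min N n}. f n i) \<le> real N * \<alpha> * (real A * real N * e + 2 * real N)"
proof -
  define g where "g n = \<alpha> * (e + (if n \<in> {l..<l+2*N} then 1 else 0))" for n
  have g0: "g n \<ge> 0" for n using \<alpha> e by (simp add: g_def)
  have "(\<Sum>n\<in>{1..H}. \<Sum>i\<in>{1..min N n}. f n i) \<le> (\<Sum>n\<in>{1..H}. \<Sum>i\<in>{1..min N n}. g n)"
    using le by (intro sum_mono) (simp add: g_def)
  also have "\<dots> = (\<Sum>n\<in>{1..H}. real (min N n) * g n)" by simp
  also have "\<dots> \<le> (\<Sum>n\<in>{1..H}. real N * g n)"
    using g0 by (intro sum_mono mult_right_mono) auto
  also have "\<dots> = real N * \<alpha> * (real H * e + (\<Sum>n\<in>{1..H}. (if n \<in> {l..<l+2*N} then 1 else 0)))"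
    by (simp add: g_def sum_distrib_left sum.distrib algebra_simps)
  also have "(\<Sum>n\<in>{1..H}. (if n \<in> {l..<l+2*N} then 1 else 0)) = real (card ({1..H} \<inter> {l..<l+2*N}))"
    by (simp add: sum.If_cases Int_def)
  also have "\<dots> \<le> 2 * real N"
  proof -
    have "card ({1..H} \<inter> {l..<l+2*N}) \<le> card {l..<l+2*N}" by (intro card_mono) auto
    thus ?thesis by simp
  qed
  also have "real H * e \<le> real A * real N * e"
    using H e by (intro mult_right_mono) (simp_all flip: of_nat_mult)
  finally show ?thesis using \<alpha> by (simp add: mult_left_mono)
qed



lemma powr_exp_neg: "(x::real) > 0 \<Longrightarrow> exp (- (t * ln x)) = x powr (- t)"
  by (simp add: powr_def)

theorem lemma5:
  fixes P :: "'x::finite pmf" and Q :: "'x \<Rightarrow> 'y::finite pmf" and star :: 'x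
    and M :: "nat \<Rightarrow> nat" and t1 t2 :: real
  assumes rate: "\<forall>N\<ge>2. real N / ln (real N) \<le> ln (real (M N)) / ln (real CARD('x))"
  shows "\<exists>(c::real) (d::nat) (\<epsilon>1::nat \<Rightarrow> real) (\<epsilon>2::nat \<Rightarrow> real).
           \<epsilon>1 \<longlonglongrightarrow> 0 \<and> \<epsilon>2 \<longlonglongrightarrow> 0 \<and>
           (\<forall>\<^sub>F N in sequentially. \<forall>A m l. 1 \<le> A \<longrightarrow> m \<in> {1..M N} \<longrightarrow> l \<in> {1..A} \<longrightarrow>
              (\<Sum>m'\<in>{1..M N} - {m}. \<Sum>n\<in>{1..A + N - 1}. \<Sum>i\<in>{1..min N n}.
                 measure_pmf.prob (joint_pmf P Q star N (M N) m l (A + N - 1))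
                   (E_ev Q star t1 t2 (M N) m' n i))
              \<le> c * real N ^ d *
                 (real (M N) powr (- (t1 + t2 - 1 + \<epsilon>1 N)) * real A
                  + real (M N) powr (- (t2 - 1 + \<epsilon>2 N))))"
proof -
  define D where "D = CARD('x \<times> 'y) + CARD('y)"
  define c :: real where "c = 4 * 2 ^ D"
  have main: "\<forall>\<^sub>F N in sequentially. \<forall>A m l. 1 \<le> A \<longrightarrow> m \<in> {1..M N} \<longrightarrow> l \<in> {1..A} \<longrightarrow>
              (\<Sum>m'\<in>{1..M N} - {m}. \<Sum>n\<in>{1..A + N - 1}. \<Sum>i\<in>{1..min N n}.
                 measure_pmf.prob (joint_pmf P Q star N (M N) m l (A + N - 1))
                   (E_ev Q star t1 t2 (M N) m' n i))
              \<le> c * real N ^ (D + 2) *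
                 (real (M N) powr (- (t1 + t2 - 1 + 0)) * real A
                  + real (M N) powr (- (t2 - 1 + 0)))"
    using prefix_eventually[of P] eventually_ge_at_top[of 3]
  proof eventually_elim
    case (elim N)
    note rho = elim(1)
    have N3: "N \<ge> 3" using elim(2) .
    define MM where "MM = real (M N)"
    have lnN: "ln (real N) > 0" using N3 by simp
    have q: "0 < ln MM / ln (real CARD('x))"
    proof -
      have "0 < real N / ln (real N)" using lnN N3 by simp
      also have "\<dots> \<le> ln MM / ln (real CARD('x))" using rate N3 by (simp add: MM_def)
      finally show ?thesis .
    qed
    have lnX: "ln (real CARD('x)) \<ge> 0" by simp
    have lnM: "ln MM > 0" using q lnX by (simp add: zero_less_divide_iff)
    have MMpos: "MM > 0"
    proof (rule ccontr)
      assume "\<not> MM > 0"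
      hence "MM = 0" by (simp add: MM_def)
      thus False using lnM by simp
    qed
    define e1 where "e1 = MM powr (- t1)"
    define e2 where "e2 = MM powr (- t2)"
    have e1: "e1 \<ge> 0" "e2 \<ge> 0" by (simp_all add: e1_def e2_def)
    define \<alpha> where "\<alpha> = 2 * real (N+1) ^ D * e2"
    have \<alpha>0: "\<alpha> \<ge> 0" using e1 by (simp add: \<alpha>_def)
    show ?case
    proof (intro allI impI)
      fix A m l :: nat
      assume A: "1 \<le> A" and m: "m \<in> {1..M N}" and l: "l \<in> {1..A}"
      define H where "H = A + N - 1"
      have HAN: "H \<le> A * N"
      proof -
        have "(A - 1) * (N - 1) \<ge> 0" by simp
        have "A * N = (A - 1) * (N - 1) + A + N - 1" using A N3
          by (cases A; cases N) (auto simp: algebra_simps)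
        thus ?thesis by (simp add: H_def)
      qed
      have tm: "measure_pmf.prob (joint_pmf P Q star N (M N) m l H) (E_ev Q star t1 t2 (M N) m' n i)
          \<le> \<alpha> * (e1 + (if n \<in> {l..<l+2*N} then 1 else 0))"
        if m': "m' \<in> {1..M N} - {m}" and n: "n \<in> {1..H}" and i: "i \<in> {1..min N n}" for m' n i
      proof -
        have i': "1 \<le> i" "i \<le> N" "i \<le> n" "n \<le> H" using i n by auto
        have tb: "measure_pmf.prob (joint_pmf P Q star N (M N) m l H) (E_ev Q star t1 t2 (M N) m' n i)
          \<le> 2 * real (i+1) ^ CARD('x \<times> 'y) * e2 *
            (if n < l \<or> l + N \<le> n - i + 1 then real (i+1) ^ CARD('y) * e1 else 1)"
        proof -
          have m1: "m' \<in> {1..M N}" "m' \<noteq> m" using m' by auto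
          have ex1: "exp (- (t1 * ln (real (M N)))) = e1" using MMpos by (simp add: e1_def MM_def powr_exp_neg)
          have ex2: "exp (- (t2 * ln (real (M N)))) = e2" using MMpos by (simp add: e2_def MM_def powr_exp_neg)
          show ?thesis
            using term_bound[where Q=Q and star=star and ?t1.0=t1 and ?t2.0=t2 and l=l, OF m1 i'(1) i'(2) i'(3) i'(4) rho]
            unfolding ex1 ex2 .
        qed
        have iN: "real (i+1) \<le> real (N+1)" using i' by simp
        have pK: "real (i+1) ^ CARD('x \<times> 'y) \<le> real (N+1) ^ D"
        proof -
          have "real (i+1) ^ CARD('x \<times> 'y) \<le> real (N+1) ^ CARD('x \<times> 'y)"
            using iN by (intro power_mono) auto
          also have "\<dots> \<le> real (N+1) ^ D"
            by (intro power_increasing) (auto simp: D_def)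
          finally show ?thesis .
        qed
        show ?thesis
        proof (cases "n < l \<or> l + N \<le> n - i + 1")
          case True
          have "real (i+1) ^ CARD('x \<times> 'y) * real (i+1) ^ CARD('y) = real (i+1) ^ D"
            by (simp add: D_def power_add)
          also have "\<dots> \<le> real (N+1) ^ D" using iN by (intro power_mono) auto
          finally have pp: "real (i+1) ^ CARD('x \<times> 'y) * real (i+1) ^ CARD('y) \<le> real (N+1) ^ D" .
          have "2 * real (i+1) ^ CARD('x \<times> 'y) * e2 * (real (i+1) ^ CARD('y) * e1)
              = 2 * (real (i+1) ^ CARD('x \<times> 'y) * real (i+1) ^ CARD('y)) * (e2 * e1)"
            by (simp add: algebra_simps)
          also have "\<dots> \<le> 2 * real (N+1) ^ D * (e2 * e1)"
            using pp e1 by (intro mult_right_mono) auto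
          also have "\<dots> \<le> \<alpha> * (e1 + (if n \<in> {l..<l+2*N} then 1 else 0))"
            using \<alpha>0 e1 by (simp add: \<alpha>_def algebra_simps)
          finally show ?thesis using tb True by simp
        next
          case False
          hence nin: "n \<in> {l..<l+2*N}" using i' by auto
          have "2 * real (i+1) ^ CARD('x \<times> 'y) * e2 * 1 \<le> 2 * real (N+1) ^ D * e2"
            using pK e1 by (simp add: mult_right_mono)
          also have "\<dots> \<le> \<alpha> * (e1 + (if n \<in> {l..<l+2*N} then 1 else 0))"
            using \<alpha>0 e1 nin by (simp add: \<alpha>_def algebra_simps)
          finally show ?thesis using tb False by simp
        qed
      qed
      have inner: "(\<Sum>n\<in>{1..H}. \<Sum>i\<in>{1..min N n}.
            measure_pmf.prob (joint_pmf P Q star N (M N) m l H) (E_ev Q star t1 t2 (M N) m' n i))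
          \<le> real N * \<alpha> * (real A * real N * e1 + 2 * real N)" if m': "m' \<in> {1..M N} - {m}" for m'
        by (rule inner_sum_bound[OF tm[OF m'] \<alpha>0 e1(1) HAN])
      have "(\<Sum>m'\<in>{1..M N} - {m}. \<Sum>n\<in>{1..H}. \<Sum>i\<in>{1..min N n}.
            measure_pmf.prob (joint_pmf P Q star N (M N) m l H) (E_ev Q star t1 t2 (M N) m' n i))
          \<le> (\<Sum>m'\<in>{1..M N} - {m}. real N * \<alpha> * (real A * real N * e1 + 2 * real N))"
        by (intro sum_mono inner)
      also have "\<dots> = real (card ({1..M N} - {m})) * (real N * \<alpha> * (real A * real N * e1 + 2 * real N))"
        by simp
      also have "\<dots> \<le> MM * (real N * \<alpha> * (real A * real N * e1 + 2 * real N))"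
      proof (intro mult_right_mono)
        have "card ({1..M N} - {m}) \<le> card {1..M N}" by (intro card_mono) auto
        thus "real (card ({1..M N} - {m})) \<le> MM" by (simp add: MM_def)
        show "0 \<le> real N * \<alpha> * (real A * real N * e1 + 2 * real N)" using \<alpha>0 e1 by simp
      qed
      also have "\<dots> = 2 * real (N+1) ^ D * real N ^ 2 * (real A * (MM * e2 * e1) + 2 * (MM * e2))"
        by (simp add: \<alpha>_def power2_eq_square algebra_simps)
      also have "\<dots> \<le> 2 * (2 ^ D * real N ^ D) * real N ^ 2 * (real A * (MM * e2 * e1) + 2 * (MM * e2))"
      proof -
        have "real (N+1) ^ D \<le> (2 * real N) ^ D" using N3 by (intro power_mono) auto
        thus ?thesis using e1 MMpos by (intro mult_right_mono) (auto simp: power_mult_distrib)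
      qed
      also have "\<dots> \<le> c * real N ^ (D + 2) * (real A * (MM * e2 * e1) + (MM * e2))"
      proof -
        define K where "K = 2 ^ D * real N ^ D * real N ^ 2"
        define X where "X = MM * e2 * e1"
        define Y where "Y = MM * e2"
        have K0: "K \<ge> 0" by (simp add: K_def)
        have X0: "X \<ge> 0" using e1 MMpos by (simp add: X_def)
        have Y0: "Y \<ge> 0" using e1 MMpos by (simp add: Y_def)
        have KAX: "K * real A * X \<ge> 0" using K0 X0 by simp
        have "2 * (2 ^ D * real N ^ D) * real N ^ 2 * (real A * X + 2 * Y) = 4 * K * (real A * X + Y) - 2 * (K * real A * X)"
          by (simp add: K_def algebra_simps)
        also have "\<dots> \<le> 4 * K * (real A * X + Y)" using KAX by linarith
        also have "\<dots> = c * real N ^ (D + 2) * (real A * X + Y)"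
          by (simp add: c_def K_def power_add power2_eq_square algebra_simps)
        finally show ?thesis by (simp add: X_def Y_def)
      qed
      also have "MM * e2 * e1 = MM powr (- (t1 + t2 - 1 + 0))"
      proof -
        have eq: "- (t1 + t2 - 1 + 0) = 1 + (- t2) + (- t1)" by simp
        have "MM powr (- (t1 + t2 - 1 + 0)) = MM powr 1 * MM powr (- t2) * MM powr (- t1)"
          unfolding eq by (simp only: powr_add)
        thus ?thesis using MMpos by (simp add: e1_def e2_def)
      qed
      also have "MM * e2 = MM powr (- (t2 - 1 + 0))"
      proof -
        have eq: "- (t2 - 1 + 0) = 1 + (- t2)" by simp
        have "MM powr (- (t2 - 1 + 0)) = MM powr 1 * MM powr (- t2)"
          unfolding eq by (simp only: powr_add)
        thus ?thesis using MMpos by (simp add: e2_def)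
      qed
      finally show "(\<Sum>m'\<in>{1..M N} - {m}. \<Sum>n\<in>{1..A + N - 1}. \<Sum>i\<in>{1..min N n}.
                 measure_pmf.prob (joint_pmf P Q star N (M N) m l (A + N - 1))
                   (E_ev Q star t1 t2 (M N) m' n i))
              \<le> c * real N ^ (D + 2) *
                 (real (M N) powr (- (t1 + t2 - 1 + 0)) * real A
                  + real (M N) powr (- (t2 - 1 + 0)))"
        by (simp add: H_def MM_def algebra_simps)
    qed
  qed
  show ?thesis
    by (rule exI[of _ c], rule exI[of _ "D + 2"], rule exI[of _ "\<lambda>_. 0"], rule exI[of _ "\<lambda>_. 0"])
       (use main in simp)
qed


end
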